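(* Let $n\geq 2$, $0<\lambda<1$, $h(x,y)=(\lambda x,\lambda y)$, and let $f:\mathbb{R}^2\to\mathbb{R}^2$ be an orientation preserving homeomorphism with bounded displacement, with $f(0,0)=(0,0)$ as its only fixed point, such that $hfh^{-1}=f^n$. Let $A=\mathbb{R}^2\setminus\{(0,0)\}$ and $\tilde A$ its universal cover. Then there exist lifts $F,H:\tilde A\to\tilde A$ of $f|_A$ and $h|_A$ respectively such that $HFH^{-1}=F^n$.
   Context: Bounded displacement: there is $K>0$ with $|f(p)-p|\leq K$ for all $p\in\mathbb{R}^2$. *)

theory Defs
  imports "HOL-Analysis.Analysis"
begin

text \<open>The plane R^2 is modelled as the complex numbers. The universal cover of
  A = C - {0} is modelled as C with covering map exp.\<close>

definition winds_once :: "(real \<Rightarrow> complex) \<Rightarrow> bool" where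
  "winds_once g \<longleftrightarrow> (\<exists>\<theta>. continuous_on {0..1} \<theta> \<and>
      (\<forall>t\<in>{0..1}. exp (\<theta> t) = g t) \<and> \<theta> 1 - \<theta> 0 = 2 * of_real pi * \<i>)"

text \<open>Orientation preserving homeomorphism of the plane: local degree +1 at every point,
  i.e. the image of every small positively oriented circle winds once around the image
  of its centre.\<close>
definition orientation_preserving_homeo :: "(complex \<Rightarrow> complex) \<Rightarrow> bool" where
  "orientation_preserving_homeo f \<longleftrightarrow>
     (\<exists>g. homeomorphism UNIV UNIV f g) \<and>
     (\<forall>p r. r > 0 \<longrightarrow>
        winds_once (\<lambda>t. f (p + of_real r * exp (2 * of_real pi * \<i> * of_real t)) - f p))"

definition is_lift :: "(complex \<Rightarrow> complex) \<Rightarrow> (complex \<Rightarrow> complex) \<Rightarrow> bool" where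
  "is_lift U u \<longleftrightarrow> continuous_on UNIV U \<and> (\<forall>w. exp (U w) = u (exp w))"

end

theory Submission
  imports Defs
begin

lemma exp1_small_zero:
  fixes z :: complex
  assumes "exp z = 1" "norm z < 2 * pi"
  shows "z = 0"
proof -
  from assms(1) obtain m :: int where re: "Re z = 0" and im: "Im z = of_int (2*m) * pi"
    using exp_eq_1 by blast
  have "norm z = \<bar>Im z\<bar>" using re by (simp add: cmod_def)
  also have "\<dots> = 2 * pi * \<bar>of_int m\<bar>" using im by (simp add: abs_mult)
  finally have "2 * pi * \<bar>real_of_int m\<bar> < 2 * pi" using assms(2) by simp
  then have "\<bar>real_of_int m\<bar> < 1" by simp
  then have "m = 0" by linarith
  then show ?thesis using re im by (simp add: complex_eq_iff)
qed

lemma exp1_const: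
  fixes D :: "complex \<Rightarrow> complex"
  assumes S: "connected S" and c: "continuous_on S D" and e: "\<And>z. z \<in> S \<Longrightarrow> exp (D z) = 1"
  shows "D constant_on S"
proof (rule continuous_discrete_range_constant[OF S c])
  fix x assume x: "x \<in> S"
  show "\<exists>e>0. \<forall>y. y \<in> S \<and> D y \<noteq> D x \<longrightarrow> e \<le> norm (D y - D x)"
  proof (intro exI[of _ "2*pi"] conjI allI impI)
    show "0 < 2*pi" by simp
    fix y assume y: "y \<in> S \<and> D y \<noteq> D x"
    have "exp (D y - D x) = 1" using e[OF x] e[of y] y by (simp add: exp_diff)
    show "2 * pi \<le> norm (D y - D x)"
    proof (rule ccontr)
      assume "\<not> 2 * pi \<le> norm (D y - D x)"
      then have "D y - D x = 0" using exp1_small_zero \<open>exp (D y - D x) = 1\<close> by force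
      then show False using y by simp
    qed
  qed
qed

lemma Ln_small:
  fixes z :: complex
  assumes "norm z \<le> 1/2"
  shows "norm (Ln (1 + z)) \<le> 2 * norm z"
proof -
  have "norm (Ln (1 + z) - z) \<le> norm z^2 / (1 - norm z)"
    using Ln_approx_linear[of z] assms by simp
  also have "\<dots> \<le> norm z"
  proof -
    have "norm z ^ 2 \<le> norm z * (1 - norm z)" using assms
      by (simp add: power2_eq_square mult_left_mono)
    then show ?thesis using assms by (simp add: divide_le_eq)
  qed
  finally show ?thesis using norm_triangle_ineq2[of "Ln (1+z)" z] by linarith
qed

theorem mainTheorem12:
  fixes f :: "complex \<Rightarrow> complex" and n :: nat and lam :: real
  assumes "n \<ge> 2"
    and "0 < lam" and "lam < 1"
    and "orientation_preserving_homeo f"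
    and "\<exists>K>0. \<forall>p. norm (f p - p) \<le> K"
    and "f 0 = 0" and "\<forall>z. f z = z \<longrightarrow> z = 0"
    and "\<forall>z. of_real lam * f (z / of_real lam) = (f ^^ n) z"
  shows "\<exists>F H Hinv. is_lift F f \<and> is_lift H (\<lambda>z. of_real lam * z) \<and>
            homeomorphism UNIV UNIV H Hinv \<and>
            (\<forall>w. H (F (Hinv w)) = (F ^^ n) w)"
proof -
  obtain g where hom: "homeomorphism UNIV UNIV f g"
    using assms(4) unfolding orientation_preserving_homeo_def by blast
  have contf: "continuous_on UNIV f" using hom homeomorphism_cont1 by blast
  have gf: "\<And>z. g (f z) = z" using hom by (simp add: homeomorphism_def)
  have fnz: "\<And>z. z \<noteq> 0 \<Longrightarrow> f z \<noteq> 0" using gf assms(6) by metis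
  obtain K where K: "K > 0" "\<And>p. norm (f p - p) \<le> K" using assms(5) by blast
  have c1: "continuous_on UNIV (\<lambda>w. f (exp w))"
    by (rule continuous_on_compose2[OF contf]) (auto intro: continuous_intros)
  obtain F where contF: "continuous_on UNIV F" and Fe: "\<And>w. f (exp w) = exp (F w)"
    using continuous_logarithm_on_simply_connected[OF c1 convex_imp_simply_connected[OF convex_UNIV]
        locally_path_connected_UNIV] fnz by auto
  define R where "R = ln (2 * K * (n+1))"
  have expR: "exp R = 2 * K * (n+1)" unfolding R_def using K by simp
  define S where "S = {w::complex. Re w > R}"
  define u where "u w = f (exp w) / exp w" for w
  have ubound: "norm (u w - 1) < 1 / (2 * (n+1))" if "w \<in> S" for w
  proof -
    have "u w - 1 = (f (exp w) - exp w) / exp w" unfolding u_def by (simp add: field_simps)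
    then have "norm (u w - 1) \<le> K / exp (Re w)" using K(2)[of "exp w"]
      by (simp add: norm_divide divide_right_mono)
    also have "\<dots> < K / exp R" using that K unfolding S_def
      by (intro divide_strict_left_mono) auto
    also have "\<dots> = 1 / (2 * (n+1))" using expR K by simp
    finally show ?thesis .
  qed
  have un: "\<And>w. w \<in> S \<Longrightarrow> u w \<notin> \<real>\<^sub>\<le>\<^sub>0"
  proof
    fix w assume w: "w \<in> S" and "u w \<in> \<real>\<^sub>\<le>\<^sub>0"
    then have "Re (u w) \<le> 0" by (auto simp: nonpos_Reals_def)
    moreover have "1 - Re (u w) \<le> norm (u w - 1)" using abs_Re_le_cmod[of "u w - 1"] by simp
    moreover have "1 / (2 * (real n + 1)) \<le> 1" by (simp add: field_simps)
    moreover have "norm (u w - 1) < 1 / (2 * (real n + 1))" using ubound[OF w] by (simp add: add.commute)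
    ultimately show False by linarith
  qed
  define E where "E w = F w - w - Ln (u w)" for w
  have contE: "continuous_on S E"
  proof -
    have cF: "continuous_on S F" using continuous_on_subset[OF contF] by blast
    have cfe: "continuous_on S (\<lambda>w. f (exp w))" using continuous_on_subset[OF c1] by blast
    have cu: "continuous_on S u" unfolding u_def by (intro continuous_intros cfe) auto
    show ?thesis unfolding E_def
      by (intro continuous_intros cF cu) (use un in auto)
  qed
  have expE: "exp (E w) = 1" if "w \<in> S" for w
  proof -
    have "u w \<noteq> 0" using un[OF that] by auto
    then have "exp (Ln (u w)) = u w" by simp
    moreover have "exp (F w) \<noteq> 0" by simp
    ultimately show ?thesis unfolding E_def
      by (simp add: exp_diff u_def Fe)
  qed
  have convS: "convex S" unfolding S_def using convex_halfspace_Re_gt by blast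
  have "E constant_on S"
    by (rule exp1_const[OF convex_connected[OF convS] contE expE])
  then obtain c where Ec: "\<And>w. w \<in> S \<Longrightarrow> E w = c" unfolding constant_on_def by blast
  define w1 where "w1 = complex_of_real (R + 1)"
  have w1S: "w1 \<in> S" unfolding S_def w1_def by simp
  have expc: "exp c = 1" using expE[OF w1S] Ec[OF w1S] by simp
  define F0 where "F0 w = F w - c" for w
  have F0e: "exp (F0 w) = f (exp w)" for w
    unfolding F0_def by (simp add: exp_diff expc Fe)
  have contF0: "continuous_on UNIV F0" unfolding F0_def by (intro continuous_intros contF)
  have F0close: "norm (F0 w - w) < 1 / (n+1)" if "w \<in> S" for w
  proof -
    have eq: "F0 w - w = Ln (u w)" using Ec[OF that] unfolding F0_def E_def by (simp add: algebra_simps)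
    have "norm (F0 w - w) \<le> 2 * norm (u w - 1)"
    proof -
      have "1 / real (2 * (n + 1)) \<le> 1/2" by (simp add: field_simps)
      then have "norm (u w - 1) \<le> 1/2" using ubound[OF that] by linarith
      then show ?thesis using Ln_small[of "u w - 1"] eq by simp
    qed
    also have "\<dots> < 1 / (n+1)" using ubound[OF that] by (simp add: field_simps)
    finally show ?thesis .
  qed
  have iter_e: "exp ((F0 ^^ j) w) = (f ^^ j) (exp w)" for j w
    by (induction j) (simp_all add: F0e)
  have contIt: "continuous_on UNIV (F0 ^^ j)" for j
  proof (induction j)
    case 0 then show ?case by (simp add: continuous_on_id)
    case (Suc j) then show ?case
      by (simp add: continuous_on_compose2[OF contF0 Suc])
  qed
  have itbound: "j \<le> n \<Longrightarrow> norm ((F0 ^^ j) w1 - w1) \<le> j / (n+1)" for j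
  proof (induction j)
    case 0 then show ?case by simp
  next
    case (Suc j)
    then have IH: "norm ((F0 ^^ j) w1 - w1) \<le> j / (n+1)" by simp
    have "j / (n+1) < (1::real)" using Suc.prems by (simp add: field_simps)
    moreover have "Re w1 - Re ((F0 ^^ j) w1) \<le> norm ((F0 ^^ j) w1 - w1)"
      using abs_Re_le_cmod[of "(F0 ^^ j) w1 - w1"] by simp
    moreover have "Re w1 = R + 1" by (simp add: w1_def)
    ultimately have "Re ((F0 ^^ j) w1) > R" using IH by linarith
    then have "(F0 ^^ j) w1 \<in> S" unfolding S_def by simp
    then have "norm (F0 ((F0 ^^ j) w1) - (F0 ^^ j) w1) < 1 / (n+1)" by (rule F0close)
    then have "norm ((F0 ^^ Suc j) w1 - w1) \<le> 1/(n+1) + j/(n+1)"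
      using IH norm_triangle_ineq[of "F0 ((F0 ^^ j) w1) - (F0 ^^ j) w1" "(F0 ^^ j) w1 - w1"]
      by simp
    then show ?case by (simp add: add_divide_distrib[symmetric] add.commute)
  qed
  define L where "L = complex_of_real (ln lam)"
  have expL: "exp L = of_real lam" unfolding L_def using assms(2) by (simp add: exp_of_real)
  define D where "D w = F0 (w - L) + L - (F0 ^^ n) w" for w
  have contD: "continuous_on UNIV D" unfolding D_def
    by (intro continuous_intros contIt continuous_on_compose2[OF contF0]) auto
  have expD: "exp (D w) = 1" for w
  proof -
    have ne: "(f ^^ n) (exp w) \<noteq> 0" using iter_e[of n w, symmetric] by simp
    have "exp (w - L) = exp w / of_real lam" using expL by (simp add: exp_diff)
    then have "exp (D w) = f (exp w / of_real lam) * of_real lam / (f ^^ n) (exp w)"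
      unfolding D_def by (simp add: exp_diff exp_add F0e iter_e)
    also have "\<dots> = 1" using assms(8)[rule_format, of "exp w"] ne by (simp add: mult.commute)
    finally show ?thesis .
  qed
  have "D constant_on UNIV" by (rule exp1_const[OF connected_UNIV contD]) (simp add: expD)
  then obtain d where Dd: "\<And>w. D w = d" unfolding constant_on_def by blast
  have "D w1 = 0"
  proof (rule exp1_small_zero[OF expD])
    have "ln lam < 0" using assms(2,3) by simp
    then have "w1 - L \<in> S" unfolding S_def w1_def L_def by simp
    then have a: "norm (F0 (w1 - L) - (w1 - L)) < 1/(n+1)" by (rule F0close)
    have b: "norm ((F0 ^^ n) w1 - w1) \<le> n/(n+1)" using itbound by simp
    have "D w1 = (F0 (w1 - L) - (w1 - L)) - ((F0 ^^ n) w1 - w1)" unfolding D_def by simp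
    then have "norm (D w1) \<le> norm (F0 (w1 - L) - (w1 - L)) + norm ((F0 ^^ n) w1 - w1)"
      by (metis norm_triangle_ineq4)
    also have "\<dots> < 1/(n+1) + n/(n+1)" using a b by simp
    also have "\<dots> = 1" by (simp add: add_divide_distrib[symmetric])
    also have "\<dots> < 2 * pi" using pi_gt3 by simp
    finally show "norm (D w1) < 2 * pi" .
  qed
  then have D0: "\<And>w. D w = 0" using Dd by metis
  show ?thesis
  proof (intro exI conjI allI)
    show "is_lift F0 f" unfolding is_lift_def using contF0 F0e by simp
    show "is_lift (\<lambda>w. w + L) (\<lambda>z. of_real lam * z)" unfolding is_lift_def
      by (auto intro: continuous_intros simp: exp_add expL mult.commute)
    show "homeomorphism UNIV UNIV (\<lambda>w. w + L) (\<lambda>w. w - L)"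
      unfolding homeomorphism_def
      by (auto intro!: continuous_intros simp: image_iff)
    fix w show "F0 (w - L) + L = (F0 ^^ n) w" using D0[of w] unfolding D_def by simp
  qed
qed

end
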